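(* Let $\mathbb{L}$ be a finite label set, $\mathbb{X}=\mathbb{R}^d$, and let $\mathcal{I}$ be a finite index set with non-negative weights $\omega^{(i)}$, $i\in\mathcal{I}$, satisfying $\sum_{i\in\mathcal{I}}\omega^{(i)}=1$. For each $i\in\mathcal{I}$ let $\boldsymbol{\pi}^{(i)}=\{(w^{(i)}(I),p^{(i)}(\cdot;I))\}_{I\in\mathcal{F}(\mathbb{L})}$ be an M$\delta$-GLMB density on $\mathcal{F}(\mathbb{X}\times\mathbb{L})$. For $L\in\mathcal{F}(\mathbb{L})$ and $\ell\in L$ set $$\eta^{(L)}(\ell)=\int_{\mathbb{X}}\prod_{i\in\mathcal{I}}\big(p^{(i)}(x,\ell;L)\big)^{\omega^{(i)}}dx,$$ and assume all $\eta^{(L)}(\ell)>0$ and that $\sum_{J\subseteq\mathbb{L}}\prod_{i\in\mathcal{I}}(w^{(i)}(J))^{\omega^{(i)}}\,[\eta^{(J)}]^{J}>0$. Then the normalized weighted geometric mean $$\overline{\boldsymbol{\pi}}(\mathbf{X})=\frac{\prod_{i\in\mathcal{I}}[\boldsymbol{\pi}^{(i)}(\mathbf{X})]^{\omega^{(i)}}}{\int\prod_{i\in\mathcal{I}}[\boldsymbol{\pi}^{(i)}(\mathbf{X})]^{\omega^{(i)}}\delta\mathbf{X}}$$ is the M$\delta$-GLMB density $\overline{\boldsymbol{\pi}}=\{(\overline{w}(L),\overline{p}(\cdot;L))\}_{L\in\mathcal{F}(\mathbb{L})}$ with $$\overline{w}(L)=\frac{\prod_{i\in\mathcal{I}}(w^{(i)}(L))^{\omega^{(i)}}\,[\eta^{(L)}]^{L}}{\sum_{J\subseteq\mathbb{L}}\prod_{i\in\mathcal{I}}(w^{(i)}(J))^{\omega^{(i)}}\,[\eta^{(J)}]^{J}},\qquad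 \overline{p}(x,\ell;L)=\frac{\prod_{i\in\mathcal{I}}(p^{(i)}(x,\ell;L))^{\omega^{(i)}}}{\eta^{(L)}(\ell)}.$$ Consequently (since the weighted Kullback–Leibler average $\arg\min_{\boldsymbol{\pi}}\sum_{i\in\mathcal{I}}\omega^{(i)}D_{KL}(\boldsymbol{\pi}\,\|\,\boldsymbol{\pi}^{(i)})$ over multi-object densities equals the normalized weighted geometric mean), this M$\delta$-GLMB is the weighted Kullback–Leibler average of the $\boldsymbol{\pi}^{(i)}$.
   Context: Notation: for a real function $h$ and finite set $X$, $h^{X}=\prod_{x\in X}h(x)$ with $h^{\varnothing}=1$. $\mathcal{F}(S)$ denotes the finite subsets of $S$; $\delta_Y(X)=1$ if $X=Y$ and $0$ otherwise; $1_S$ is the indicator of $S$. For $\mathbf{x}=(x,\ell)\in\mathbb{X}\times\mathbb{L}$, $\mathcal{L}(\mathbf{x})=\ell$, $\mathcal{L}(\mathbf{X})=\{\mathcal{L}(\mathbf{x}):\mathbf{x}\in\mathbf{X}\}$, and the distinct label indicator is $\Delta(\mathbf{X})=\delta_{|\mathbf{X}|}(|\mathcal{L}(\mathbf{X})|)$. The set integral of $f$ on $\mathcal{F}(\mathbb{X}\times\mathbb{L})$ is $\int f(\mathbf{X})\delta\mathbf{X}=\sum_{n=0}^{\infty}\frac{1}{n!}\sum_{(\ell_1,\dots,\ell_n)\in\mathbb{L}^n}\int f(\{(x_1,\ell_1),\dots,(x_n,\ell_n)\})\,d(x_1,\dots,x_n)$. A multi-object density is a non-negative $\boldsymbol{\pi}$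 on $\mathcal{F}(\mathbb{X}\times\mathbb{L})$ with set integral $1$; $D_{KL}(\boldsymbol{\pi}\|\boldsymbol{\pi}')=\int\boldsymbol{\pi}(\mathbf{X})\log(\boldsymbol{\pi}(\mathbf{X})/\boldsymbol{\pi}'(\mathbf{X}))\delta\mathbf{X}$. An M$\delta$-GLMB density with parameter set $\{(w(I),p(\cdot;I))\}_{I\in\mathcal{F}(\mathbb{L})}$ is $\boldsymbol{\pi}(\mathbf{X})=\Delta(\mathbf{X})\sum_{I\in\mathcal{F}(\mathbb{L})}\delta_I(\mathcal{L}(\mathbf{X}))\,w(I)\,[p(\cdot;I)]^{\mathbf{X}}=\Delta(\mathbf{X})\,w(\mathcal{L}(\mathbf{X}))\,[p(\cdot;\mathcal{L}(\mathbf{X}))]^{\mathbf{X}}$, where $w(I)\ge0$, $\sum_{I\in\mathcal{F}(\mathbb{L})}w(I)=1$, and for each $I$ and each $\ell\in I$, $p(\cdot,\ell;I)$ is a probability density on $\mathbb{X}$ (here $[p(\cdot;I)]^{\mathbf{X}}=\prod_{(x,\ell)\in\mathbf{X}}p(x,\ell;I)$). *)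

theory Defs
  imports "HOL-Analysis.Analysis"
begin

definition gpow :: "real \<Rightarrow> real \<Rightarrow> real" where
  "gpow x a = (if a = 0 then 1 else x powr a)"

definition labels :: "('x \<times> 'l) set \<Rightarrow> 'l set" where
  "labels X = snd ` X"

definition dli :: "('x \<times> 'l) set \<Rightarrow> real" where
  "dli X = (if card X = card (labels X) then 1 else 0)"

definition lab_set :: "(nat \<Rightarrow> 'x) \<Rightarrow> (nat \<Rightarrow> 'l) \<Rightarrow> nat \<Rightarrow> ('x \<times> 'l) set" where
  "lab_set xs ls n = (\<lambda>i. (xs i, ls i)) ` {..<n}"

definition mo_set_integral :: "(('x::euclidean_space \<times> 'l::finite) set \<Rightarrow> real) \<Rightarrow> real" where
  "mo_set_integral f =
     (\<Sum>n. (1 / fact n) *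
        (\<Sum>ls \<in> ({..<n} \<rightarrow>\<^sub>E (UNIV::'l set)).
           integral\<^sup>L (PiM {..<n} (\<lambda>_. lborel)) (\<lambda>xs. f (lab_set xs ls n))))"

definition is_density :: "('x::euclidean_space \<Rightarrow> real) \<Rightarrow> bool" where
  "is_density f \<longleftrightarrow> (\<forall>x. 0 \<le> f x) \<and> has_bochner_integral lborel f 1"

definition mdglmb :: "('l set \<Rightarrow> real) \<Rightarrow> ('x \<Rightarrow> 'l \<Rightarrow> 'l set \<Rightarrow> real) \<Rightarrow> ('x \<times> 'l) set \<Rightarrow> real" where
  "mdglmb w p X = dli X * w (labels X) * (\<Prod>y\<in>X. p (fst y) (snd y) (labels X))"

definition is_mdglmb_param :: "('l::finite set \<Rightarrow> real) \<Rightarrow> ('x::euclidean_space \<Rightarrow> 'l \<Rightarrow> 'l set \<Rightarrow> real) \<Rightarrow> bool" where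
  "is_mdglmb_param w p \<longleftrightarrow> (\<forall>I. 0 \<le> w I) \<and> (\<Sum>I\<in>UNIV. w I) = 1 \<and>
     (\<forall>I. \<forall>l\<in>I. is_density (\<lambda>x. p x l I))"

definition eta :: "'i set \<Rightarrow> ('i \<Rightarrow> real) \<Rightarrow> ('i \<Rightarrow> 'x::euclidean_space \<Rightarrow> 'l \<Rightarrow> 'l set \<Rightarrow> real)
                   \<Rightarrow> 'l set \<Rightarrow> 'l \<Rightarrow> real" where
  "eta \<I> \<omega> p L l = (\<integral>x. (\<Prod>i\<in>\<I>. gpow (p i x l L) (\<omega> i)) \<partial>lborel)"

definition geo_mean :: "'i set \<Rightarrow> ('i \<Rightarrow> real) \<Rightarrow> ('i \<Rightarrow> ('x::euclidean_space \<times> 'l::finite) set \<Rightarrow> real)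
                        \<Rightarrow> ('x \<times> 'l) set \<Rightarrow> real" where
  "geo_mean \<I> \<omega> \<pi> X =
     (\<Prod>i\<in>\<I>. gpow (\<pi> i X) (\<omega> i)) / mo_set_integral (\<lambda>Y. \<Prod>i\<in>\<I>. gpow (\<pi> i Y) (\<omega> i))"

end

theory Submission
  imports Defs "HOL-Combinatorics.Multiset_Permutations" begin


lemma card_fiber:
  fixes L :: "'l set"
  assumes "finite L" "card L = n"
  shows "card {ls \<in> {..<n} \<rightarrow>\<^sub>E (UNIV::'l set). ls ` {..<n} = L} = fact n"
proof -
  let ?A = "{ls \<in> {..<n} \<rightarrow>\<^sub>E (UNIV::'l set). ls ` {..<n} = L}"
  have "bij_betw (\<lambda>ls. map ls [0..<n]) ?A (permutations_of_set L)"
  proof (rule bij_betw_byWitness[where f'="\<lambda>xs i. if i < n then xs ! i else undefined"])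
    show "\<forall>a\<in>?A. (\<lambda>i. if i < n then map a [0..<n] ! i else undefined) = a"
      by (auto simp: PiE_def extensional_def fun_eq_iff)
    show "\<forall>a'\<in>permutations_of_set L. map (\<lambda>i. if i < n then a' ! i else undefined) [0..<n] = a'"
      using assms by (auto simp: permutations_of_set_def list_eq_iff_nth_eq distinct_card)
    show "(\<lambda>ls. map ls [0..<n]) ` ?A \<subseteq> permutations_of_set L"
    proof
      fix xs assume "xs \<in> (\<lambda>ls. map ls [0..<n]) ` ?A"
      then obtain ls where ls: "ls \<in> ?A" and xs: "xs = map ls [0..<n]" by blast
      have "inj_on ls {..<n}" using ls assms by (intro eq_card_imp_inj_on) auto
      then show "xs \<in> permutations_of_set L" using ls xs
        by (auto simp: permutations_of_set_def distinct_map atLeast0LessThan)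
    qed
    show "(\<lambda>xs i. if i < n then xs ! i else undefined) ` permutations_of_set L \<subseteq> ?A"
    proof
      fix f assume "f \<in> (\<lambda>xs i. if i < n then xs ! i else undefined) ` permutations_of_set L"
      then obtain xs where xs: "xs \<in> permutations_of_set L" and f: "f = (\<lambda>i. if i < n then xs ! i else undefined)" by blast
      have len: "length xs = n" using xs assms by (auto simp: permutations_of_set_def distinct_card)
      have "f ` {..<n} = set xs" using len by (auto simp: f set_conv_nth image_def)
      then show "f \<in> ?A" using xs by (auto simp: f permutations_of_set_def PiE_def extensional_def)
    qed
  qed
  then have "card ?A = card (permutations_of_set L)" by (rule bij_betw_same_card)
  then show ?thesis using assms by simp
qed



lemma ae_diag:
  fixes i j n :: nat
  assumes "i \<noteq> j" "i < n" "j < n"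
  shows "AE xs in PiM {..<n} (\<lambda>_. lborel::'x::euclidean_space measure). xs i \<noteq> xs j"
proof -
  interpret P: product_sigma_finite "\<lambda>_::nat. lborel::'x measure"
    by (simp add: product_sigma_finite_def sigma_finite_lborel)
  define J where "J = {..<n} - {i}"
  have IJ: "{..<n} = insert i J" "finite J" "i \<notin> J" "j \<in> J" using assms by (auto simp: J_def)
  let ?M = "PiM (insert i J) (\<lambda>_::nat. lborel::'x measure)"
  define D where "D = {xs \<in> space ?M. xs i = xs j}"
  have Dm: "D \<in> sets ?M" unfolding D_def
    by (rule measurable_equality_set) (use IJ in auto)
  have "emeasure ?M D = (\<integral>\<^sup>+ x. indicator D x \<partial>?M)"
    using Dm by simp
  also have "\<dots> = (\<integral>\<^sup>+ x. (\<integral>\<^sup>+ y. indicator D (x(i := y)) \<partial>lborel) \<partial>PiM J (\<lambda>_. lborel::'x measure))"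
    using Dm IJ by (intro P.product_nn_integral_insert) auto
  also have "\<dots> = (\<integral>\<^sup>+ x. 0 \<partial>PiM J (\<lambda>_. lborel::'x measure))"
  proof (rule nn_integral_cong)
    fix x assume x: "x \<in> space (PiM J (\<lambda>_::nat. lborel::'x measure))"
    have "(\<integral>\<^sup>+ y. indicator D (x(i := y)) \<partial>lborel) = (\<integral>\<^sup>+ y. indicator {x j} y \<partial>(lborel::'x measure))"
    proof (rule nn_integral_cong)
      fix y :: 'x
      have "x(i := y) \<in> space ?M" using x IJ by (auto simp: space_PiM PiE_def extensional_def)
      then show "indicator D (x(i := y)) = (indicator {x j} y :: ennreal)"
        using IJ by (auto simp: D_def indicator_def)
    qed
    also have "\<dots> = emeasure lborel {x j}" by simp
    also have "\<dots> = 0" by (rule emeasure_lborel_countable) simp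
    finally show "(\<integral>\<^sup>+ y. indicator D (x(i := y)) \<partial>lborel) = 0" .
  qed
  also have "\<dots> = 0" by simp
  finally have "D \<in> null_sets ?M" using Dm by auto
  then show ?thesis unfolding IJ(1)
    by (rule AE_I') (auto simp: D_def)
qed



lemma gpow_nonneg: "0 \<le> gpow x a" by (simp add: gpow_def)

lemma gpow_one[simp]: "gpow 1 a = 1" by (simp add: gpow_def)

lemma gpow_mult: "0 \<le> x \<Longrightarrow> 0 \<le> y \<Longrightarrow> gpow (x * y) a = gpow x a * gpow y a"
  by (simp add: gpow_def powr_mult)

lemma gpow_prod: "(\<And>x. x \<in> A \<Longrightarrow> 0 \<le> f x) \<Longrightarrow> gpow (\<Prod>x\<in>A. f x) a = (\<Prod>x\<in>A. gpow (f x) a)"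
proof (induction A rule: infinite_finite_induct)
  case (insert x F)
  then show ?case by (simp add: gpow_mult prod_nonneg)
qed simp_all

lemma prod_gpow_zero:
  assumes "finite I" "(\<Sum>i\<in>I. \<omega> i) = (1::real)"
  shows "(\<Prod>i\<in>I. gpow 0 (\<omega> i)) = 0"
proof -
  obtain i where "i \<in> I" "\<omega> i \<noteq> 0"
    using assms(2) by (metis sum.neutral zero_neq_one)
  then show ?thesis using assms(1) by (auto simp: gpow_def intro!: prod_zero)
qed

lemma geo_mdglmb:
  fixes Y :: "('x \<times> 'l) set"
  assumes fin: "finite I" and om: "(\<Sum>i\<in>I. \<omega> i) = (1::real)"
    and wnn: "\<And>i L. i \<in> I \<Longrightarrow> 0 \<le> w i L"
    and pnn: "\<And>i x l L. i \<in> I \<Longrightarrow> l \<in> L \<Longrightarrow> 0 \<le> p i x l L"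
  shows "(\<Prod>i\<in>I. gpow (mdglmb (w i) (p i) Y) (\<omega> i)) =
     mdglmb (\<lambda>L. \<Prod>i\<in>I. gpow (w i L) (\<omega> i)) (\<lambda>x l L. \<Prod>i\<in>I. gpow (p i x l L) (\<omega> i)) Y"
proof (cases "dli Y = 0")
  case True
  then show ?thesis using prod_gpow_zero[OF fin om] by (simp add: mdglmb_def)
next
  case False
  then have d: "dli Y = 1" by (simp add: dli_def split: if_splits)
  let ?L = "labels Y"
  have sn: "y \<in> Y \<Longrightarrow> snd y \<in> ?L" for y by (auto simp: labels_def)
  have "(\<Prod>i\<in>I. gpow (mdglmb (w i) (p i) Y) (\<omega> i)) =
        (\<Prod>i\<in>I. gpow (w i ?L) (\<omega> i) * (\<Prod>y\<in>Y. gpow (p i (fst y) (snd y) ?L) (\<omega> i)))"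
    using d by (intro prod.cong refl) (auto simp: mdglmb_def gpow_mult wnn pnn sn prod_nonneg gpow_prod)
  also have "\<dots> = (\<Prod>i\<in>I. gpow (w i ?L) (\<omega> i)) * (\<Prod>y\<in>Y. \<Prod>i\<in>I. gpow (p i (fst y) (snd y) ?L) (\<omega> i))"
    by (simp add: prod.distrib prod.swap[of _ I])
  finally show ?thesis using d by (simp add: mdglmb_def)
qed

lemma inj_case:
  fixes xs :: "nat \<Rightarrow> 'x" and ls :: "nat \<Rightarrow> 'l"
  assumes "inj_on ls {..<n}"
  shows "mdglmb W q (lab_set xs ls n) = W (ls ` {..<n}) * (\<Prod>k<n. q (xs k) (ls k) (ls ` {..<n}))"
proof -
  have inj: "inj_on (\<lambda>k. (xs k, ls k)) {..<n}" using assms by (auto simp: inj_on_def)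
  have lab: "labels (lab_set xs ls n) = ls ` {..<n}" by (auto simp: labels_def lab_set_def image_image)
  have "card (lab_set xs ls n) = n" using inj by (simp add: lab_set_def card_image)
  moreover have "card (ls ` {..<n}) = n" using assms by (simp add: card_image)
  ultimately have d: "dli (lab_set xs ls n) = 1" by (simp add: dli_def lab)
  show ?thesis unfolding mdglmb_def d lab
    by (simp add: lab_set_def prod.reindex[OF inj])
qed

lemma noninj_case:
  fixes xs :: "nat \<Rightarrow> 'x" and ls :: "nat \<Rightarrow> 'l"
  assumes "i < n" "j < n" "ls i = ls j" "xs i \<noteq> xs j"
  shows "mdglmb W q (lab_set xs ls n) = 0"
proof -
  let ?X = "lab_set xs ls n"
  have fin: "finite ?X" by (simp add: lab_set_def)
  have "\<not> inj_on snd ?X"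
    using assms unfolding inj_on_def lab_set_def by (auto intro!: bexI[of _ "(xs i, ls i)"] bexI[of _ "(xs j, ls j)"])
  then have "card (labels ?X) \<noteq> card ?X"
    using eq_card_imp_inj_on[OF fin] unfolding labels_def by metis
  then show ?thesis by (simp add: mdglmb_def dli_def)
qed


lemma term_eq:
  fixes W :: "'l::finite set \<Rightarrow> real" and q :: "'x::euclidean_space \<Rightarrow> 'l \<Rightarrow> 'l set \<Rightarrow> real"
  assumes int: "\<And>L l. l \<in> L \<Longrightarrow> integrable lborel (\<lambda>x. q x l L)"
  defines "F \<equiv> (\<lambda>L. W L * (\<Prod>l\<in>L. integral\<^sup>L lborel (\<lambda>x. q x l L)))"
  shows "(1 / fact n) * (\<Sum>ls \<in> ({..<n} \<rightarrow>\<^sub>E (UNIV::'l set)).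
           integral\<^sup>L (PiM {..<n} (\<lambda>_. lborel)) (\<lambda>xs. mdglmb W q (lab_set xs ls n)))
         = (\<Sum>L\<in>{L. card L = n}. F L)"
proof -
  interpret P: product_sigma_finite "\<lambda>_::nat. lborel::'x measure"
    by (simp add: product_sigma_finite_def sigma_finite_lborel)
  let ?P = "{..<n} \<rightarrow>\<^sub>E (UNIV::'l set)"
  let ?h = "\<lambda>ls. if inj_on ls {..<n} then F (ls ` {..<n}) else 0"
  have step: "integral\<^sup>L (PiM {..<n} (\<lambda>_. lborel)) (\<lambda>xs. mdglmb W q (lab_set xs ls n)) = ?h ls" for ls
  proof (cases "inj_on ls {..<n}")
    case True
    let ?L = "ls ` {..<n}"
    have "integral\<^sup>L (PiM {..<n} (\<lambda>_. lborel)) (\<lambda>xs. mdglmb W q (lab_set xs ls n))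
        = integral\<^sup>L (PiM {..<n} (\<lambda>_. lborel)) (\<lambda>xs. W ?L * (\<Prod>k\<in>{..<n}. q (xs k) (ls k) ?L))"
      by (rule Bochner_Integration.integral_cong) (simp_all only: inj_case[OF True])
    also have "\<dots> = W ?L * (\<Prod>k\<in>{..<n}. integral\<^sup>L lborel (\<lambda>x. q x (ls k) ?L))"
    proof -
      have "\<And>k. k \<in> {..<n} \<Longrightarrow> integrable lborel (\<lambda>x. q x (ls k) ?L)" using int by auto
      then have "integral\<^sup>L (PiM {..<n} (\<lambda>_. lborel)) (\<lambda>xs. (\<Prod>k\<in>{..<n}. q (xs k) (ls k) ?L))
          = (\<Prod>k\<in>{..<n}. integral\<^sup>L lborel (\<lambda>x. q x (ls k) ?L))"
        using P.product_integral_prod[of "{..<n}" "\<lambda>k x. q x (ls k) ?L"] by simp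
      then show ?thesis by simp
    qed
    also have "\<dots> = F ?L"
      unfolding F_def by (simp add: prod.reindex[OF True])
    finally show ?thesis using True by simp
  next
    case False
    then obtain i j where ij: "i < n" "j < n" "i \<noteq> j" "ls i = ls j"
      unfolding inj_on_def by auto
    have "AE xs in PiM {..<n} (\<lambda>_. lborel::'x measure). mdglmb W q (lab_set xs ls n) = 0"
      using ae_diag[OF ij(3,1,2), where 'x='x]
      by eventually_elim (use noninj_case ij in blast)
    then show ?thesis using False by (simp add: integral_eq_zero_AE)
  qed
  have fib: "sum ?h {ls \<in> ?P. ls ` {..<n} = L} = (if card L = n then fact n * F L else 0)" for L
  proof (cases "card L = n")
    case True
    have "sum ?h {ls \<in> ?P. ls ` {..<n} = L} = sum (\<lambda>_. F L) {ls \<in> ?P. ls ` {..<n} = L}"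
      using True by (intro sum.cong refl) (auto intro: eq_card_imp_inj_on)
    also have "\<dots> = fact n * F L" using card_fiber[OF _ True] by simp
    finally show ?thesis using True by simp
  next
    case False
    have "sum ?h {ls \<in> ?P. ls ` {..<n} = L} = 0"
      using False by (intro sum.neutral) (auto simp: card_image)
    then show ?thesis using False by simp
  qed
  have "(\<Sum>ls \<in> ?P. integral\<^sup>L (PiM {..<n} (\<lambda>_. lborel)) (\<lambda>xs. mdglmb W q (lab_set xs ls n)))
      = sum ?h ?P" using step by simp
  also have "\<dots> = (\<Sum>L\<in>UNIV. sum ?h {ls \<in> ?P. ls ` {..<n} = L})"
    by (rule sum.group[symmetric]) (auto simp: finite_PiE)
  also have "\<dots> = (\<Sum>L\<in>UNIV. if card L = n then fact n * F L else 0)"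
    using fib by simp
  also have "\<dots> = fact n * (\<Sum>L\<in>{L. card L = n}. F L)"
    by (simp add: sum.If_cases sum_distrib_left)
  finally show ?thesis by simp
qed

lemma mo_int:
  fixes W :: "'l::finite set \<Rightarrow> real" and q :: "'x::euclidean_space \<Rightarrow> 'l \<Rightarrow> 'l set \<Rightarrow> real"
  assumes int: "\<And>L l. l \<in> L \<Longrightarrow> integrable lborel (\<lambda>x. q x l L)"
  shows "mo_set_integral (mdglmb W q) = (\<Sum>J\<in>UNIV. W J * (\<Prod>l\<in>J. integral\<^sup>L lborel (\<lambda>x. q x l J)))"
proof -
  define F where "F = (\<lambda>L. W L * (\<Prod>l\<in>L. integral\<^sup>L lborel (\<lambda>x. q x l L)))"
  have "mo_set_integral (mdglmb W q) = (\<Sum>n. \<Sum>L\<in>{L. card L = n}. F L)"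
  proof -
    have eq: "\<And>n. (1 / fact n) * (\<Sum>ls \<in> ({..<n} \<rightarrow>\<^sub>E (UNIV::'l set)).
           integral\<^sup>L (PiM {..<n} (\<lambda>_. lborel)) (\<lambda>xs. mdglmb W q (lab_set xs ls n)))
         = (\<Sum>L\<in>{L. card L = n}. F L)"
      unfolding F_def by (rule term_eq[OF int])
    show ?thesis unfolding mo_set_integral_def eq ..
  qed
  also have "\<dots> = (\<Sum>n\<in>{..CARD('l)}. \<Sum>L\<in>{L. card L = n}. F L)"
  proof (rule suminf_finite)
    fix n assume "n \<notin> {..CARD('l)}"
    then have "{L::'l set. card L = n} = {}"
    proof -
      have "card L \<noteq> n" for L :: "'l set"
      proof -
        have "card L \<le> CARD('l)" by (rule card_mono) auto
        then show ?thesis using \<open>n \<notin> {..CARD('l)}\<close> by auto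
      qed
      then show ?thesis by auto
    qed
    then show "(\<Sum>L\<in>{L. card L = n}. F L) = 0" by simp
  qed simp
  also have "\<dots> = (\<Sum>L\<in>UNIV. F L)"
  proof -
    have "\<And>L::'l set. card L \<le> CARD('l)" by (rule card_mono) auto
    then have "card ` (UNIV::'l set set) \<subseteq> {..CARD('l)}" by auto
    from sum.group[OF finite finite_atMost this, of F] show ?thesis by simp
  qed
  finally show ?thesis by (simp add: F_def)
qed

theorem proposition1:
  fixes \<I> :: "'i set" and \<omega> :: "'i \<Rightarrow> real"
    and w :: "'i \<Rightarrow> 'l::finite set \<Rightarrow> real"
    and p :: "'i \<Rightarrow> 'x::euclidean_space \<Rightarrow> 'l \<Rightarrow> 'l set \<Rightarrow> real"
  assumes fin: "finite \<I>"
    and om_nonneg: "\<forall>i\<in>\<I>. 0 \<le> \<omega> i"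
    and om_sum: "(\<Sum>i\<in>\<I>. \<omega> i) = 1"
    and glmb: "\<forall>i\<in>\<I>. is_mdglmb_param (w i) (p i)"
    and eta_pos: "\<forall>L. \<forall>l\<in>L. eta \<I> \<omega> p L l > 0"
    and den_pos: "(\<Sum>J\<in>UNIV. (\<Prod>i\<in>\<I>. gpow (w i J) (\<omega> i)) * (\<Prod>l\<in>J. eta \<I> \<omega> p J l)) > 0"
  shows "let S = (\<Sum>J\<in>UNIV. (\<Prod>i\<in>\<I>. gpow (w i J) (\<omega> i)) * (\<Prod>l\<in>J. eta \<I> \<omega> p J l));
             wbar = (\<lambda>L. (\<Prod>i\<in>\<I>. gpow (w i L) (\<omega> i)) * (\<Prod>l\<in>L. eta \<I> \<omega> p L l) / S);
             pbar = (\<lambda>x l L. (\<Prod>i\<in>\<I>. gpow (p i x l L) (\<omega> i)) / eta \<I> \<omega> p L l)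
         in is_mdglmb_param wbar pbar \<and>
            (\<forall>X. finite X \<longrightarrow>
               geo_mean \<I> \<omega> (\<lambda>i. mdglmb (w i) (p i)) X = mdglmb wbar pbar X)"
  proof -
  have wnn: "\<And>i L. i \<in> \<I> \<Longrightarrow> 0 \<le> w i L"
    using glmb by (auto simp: is_mdglmb_param_def)
  have pnn: "\<And>i x l L. i \<in> \<I> \<Longrightarrow> l \<in> L \<Longrightarrow> 0 \<le> p i x l L"
    using glmb by (auto simp: is_mdglmb_param_def is_density_def)
  define W where "W = (\<lambda>L. \<Prod>i\<in>\<I>. gpow (w i L) (\<omega> i))"
  define q where "q = (\<lambda>x l L. \<Prod>i\<in>\<I>. gpow (p i x l L) (\<omega> i))"
  have eta_q: "eta \<I> \<omega> p L l = integral\<^sup>L lborel (\<lambda>x. q x l L)" for L l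
    by (simp add: eta_def q_def)
  have int: "integrable lborel (\<lambda>x. q x l L)" if "l \<in> L" for L l
  proof (rule ccontr)
    assume "\<not> integrable lborel (\<lambda>x. q x l L)"
    then have "eta \<I> \<omega> p L l = 0" by (simp add: eta_q not_integrable_integral_eq)
    then show False using eta_pos that by fastforce
  qed
  define S where "S = (\<Sum>J\<in>UNIV. W J * (\<Prod>l\<in>J. eta \<I> \<omega> p J l))"
  have Spos: "S > 0" using den_pos by (simp add: S_def W_def)
  have fun_eq: "(\<lambda>Y. \<Prod>i\<in>\<I>. gpow (mdglmb (w i) (p i) Y) (\<omega> i)) = mdglmb W q"
    unfolding W_def q_def by (intro ext geo_mdglmb[OF fin om_sum]) (auto intro: wnn pnn)
  have moS: "mo_set_integral (mdglmb W q) = S"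
    unfolding S_def eta_q by (rule mo_int[OF int])
  have Wnn: "0 \<le> W L" for L by (simp add: W_def prod_nonneg gpow_nonneg)
  have qnn: "0 \<le> q x l L" for x l L by (simp add: q_def prod_nonneg gpow_nonneg)
  have etann: "0 \<le> (\<Prod>l\<in>L. eta \<I> \<omega> p L l)" for L
    using eta_pos by (intro prod_nonneg) (auto intro: less_imp_le)
  define wbar where "wbar = (\<lambda>L. W L * (\<Prod>l\<in>L. eta \<I> \<omega> p L l) / S)"
  define pbar where "pbar = (\<lambda>x l L. q x l L / eta \<I> \<omega> p L l)"
  have part1: "is_mdglmb_param wbar pbar"
    unfolding is_mdglmb_param_def
  proof (intro conjI allI ballI)
    fix L :: "'l set" show "0 \<le> wbar L" unfolding wbar_def using Wnn etann Spos by simp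
  next
    show "(\<Sum>L\<in>UNIV. wbar L) = 1" unfolding wbar_def using Spos
      by (simp add: sum_divide_distrib[symmetric] S_def)
  next
    fix L :: "'l set" and l assume l: "l \<in> L"
    have ep: "eta \<I> \<omega> p L l > 0" using eta_pos l by blast
    have "has_bochner_integral lborel (\<lambda>x. q x l L) (eta \<I> \<omega> p L l)"
      unfolding eta_q using int[OF l] by (rule has_bochner_integral_integrable)
    then have "has_bochner_integral lborel (\<lambda>x. q x l L / eta \<I> \<omega> p L l) (eta \<I> \<omega> p L l / eta \<I> \<omega> p L l)"
      by (rule has_bochner_integral_divide_zero)
    then show "is_density (\<lambda>x. pbar x l L)"
      unfolding is_density_def pbar_def using ep qnn by simp
  qed
  have part2: "geo_mean \<I> \<omega> (\<lambda>i. mdglmb (w i) (p i)) X = mdglmb wbar pbar X" if finX: "finite X" for X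
  proof -
    have g: "geo_mean \<I> \<omega> (\<lambda>i. mdglmb (w i) (p i)) X = mdglmb W q X / S"
      unfolding geo_mean_def fun_eq moS using fun_cong[OF fun_eq, of X] by simp
    show ?thesis
    proof (cases "dli X = 0")
      case True
      then show ?thesis unfolding g by (simp add: mdglmb_def)
    next
      case False
      then have d: "dli X = 1" and c: "card X = card (labels X)" by (auto simp: dli_def split: if_splits)
      let ?L = "labels X"
      have inj: "inj_on snd X" using eq_card_imp_inj_on[OF finX, of snd] c by (simp add: labels_def)
      have pe: "(\<Prod>y\<in>X. eta \<I> \<omega> p ?L (snd y)) = (\<Prod>l\<in>?L. eta \<I> \<omega> p ?L l)"
        unfolding labels_def by (simp add: prod.reindex[OF inj])
      have nz: "(\<Prod>l\<in>?L. eta \<I> \<omega> p ?L l) \<noteq> 0"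
      proof -
        have fL: "finite ?L" using finX by (simp add: labels_def)
        have "\<forall>l\<in>?L. eta \<I> \<omega> p ?L l \<noteq> 0" using eta_pos by fastforce
        then show ?thesis by (simp add: prod_zero_iff[OF fL])
      qed
      have "mdglmb wbar pbar X = W ?L * (\<Prod>l\<in>?L. eta \<I> \<omega> p ?L l) / S *
          ((\<Prod>y\<in>X. q (fst y) (snd y) ?L) / (\<Prod>y\<in>X. eta \<I> \<omega> p ?L (snd y)))"
        using d by (simp add: mdglmb_def wbar_def pbar_def prod_dividef)
      also have "\<dots> = W ?L * (\<Prod>y\<in>X. q (fst y) (snd y) ?L) / S"
        unfolding pe using nz by simp
      finally show ?thesis unfolding g using d by (simp add: mdglmb_def)
    qed
  qed
  show ?thesis
    unfolding Let_def
    using part1 part2 unfolding wbar_def pbar_def W_def q_def S_def by blast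
qed

end
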